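(* Let $T_i,T_j$ be indecomposable summands of a basic maximal rigid object $T$ of $\mathcal{C}_n$, and let $T_1$ be the top summand of $T$. The following are equivalent: (a) there is a nonzero $\mathcal{D}$-map $T_i\to T_j$; (b) either (b') there is a non-degenerate $T$-subwing triple $(T_x;T_y,T_z)$ such that $T_i$ is on the left edge of $\mathcal{W}_{T_z}$ and $T_j$ is on the right edge of $\mathcal{W}_{T_y}$, or (b'') $T_i$ is on the left edge of $\mathcal{W}_{T_1}$ and $T_j$ is on the right edge of $\mathcal{W}_{T_1}$.
   Context: Let $k$ be algebraically closed, $n\ge2$, $\mathcal{T}_n$ the tube of rank $n$ (finite-dimensional nilpotent representations of the cyclically oriented $\tilde A_{n-1}$-quiver; AR-translation $\tau$), $\mathcal{C}_n=D^b(\mathcal{T}_n)/\tau^{-1}[1]$ the cluster tube, with indecomposables identified with those of $\mathcal{T}_n$. Indecomposables have coordinates $(a,b)$, $a\in\mathbb{Z}/n$, $b\ge1$ the quasilength, with $\tau(a,b)=(a-1,b)$ and irreducible maps $(a,b)\to(a,b+1)$ and $(a,b)\to(a+1,b-1)$. For indecomposables $X,Y$, $\operatorname{Hom}_{\mathcal{C}_n}(X,Y)=\operatorname{Hom}_{\mathcal{T}_n}(X,Y)\oplus\operatorname{Hom}_{D^b}(X,\tau^{-1}Y[1])$, the second summand $\cong D\operatorname{Hom}_{\mathcal{T}_n}(Y,\tau^2X)$; its elements are $\mathcal{D}$-maps. For $X=(a,i)$, $i\le n-1$, the wing $\mathcal{W}_X=\{(a+s,i'):s\ge0,i'\ge1,s+i'\le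 i\}$ has left edge $\{(a,i'):1\le i'\le i\}$ and right edge $\{(a+i-i',i'):1\le i'\le i\}$. $T$ is maximal rigid if $\operatorname{Ext}^1_{\mathcal{C}_n}(T,T)=0$ and $\operatorname{Ext}^1(T\oplus X,T\oplus X)=0$ implies $X\in\operatorname{add}T$; a basic one has a unique summand $T_1$ (top summand) of quasilength $n-1$, and all summands lie in $\mathcal{W}_{T_1}$. A non-degenerate subwing triple $(X;Y,Z)$: $X=(a,b)$ with $3\le b\le n-1$, $Y=(a,c)$, $Z=(a+c+1,b-c-1)$ for some $1\le c\le b-2$; it is a $T$-subwing triple if $X,Y,Z$ are summands of $T$. *)

theory Defs
  imports "HOL-Computational_Algebra.Polynomial"
begin

text \<open>Indecomposable objects of the tube T_n (equivalently of the cluster tube C_n):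
  pairs (a,b) with a in {0..<n} (representing Z/n) and quasilength b >= 1.\<close>

type_synonym obj = "nat \<times> nat"

definition ind :: "nat \<Rightarrow> obj \<Rightarrow> bool" where
  "ind n X \<longleftrightarrow> fst X < n \<and> 1 \<le> snd X"

definition tau :: "nat \<Rightarrow> obj \<Rightarrow> obj" where
  "tau n X = ((fst X + n - 1) mod n, snd X)"

text \<open>Concrete model of the indecomposable nilpotent representation (a,b) of the cyclic
  quiver: basis e_0,...,e_(b-1), e_i lying at vertex (a+i) mod n, arrow action N e_(i+1) = e_i,
  N e_0 = 0 (so e_0 spans the simple socle at vertex a).  A morphism (a,b) -> (c,d) is a matrix F
  (f(e_i) = sum_j F j i e_j) respecting the vertex grading and commuting with the arrows.\<close>
definition homT :: "nat \<Rightarrow> obj \<Rightarrow> obj \<Rightarrow> (nat \<Rightarrow> nat \<Rightarrow> 'k::field) set" where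
  "homT n X Y = {F.
     (\<forall>j i. (i \<ge> snd X \<or> j \<ge> snd Y) \<longrightarrow> F j i = 0) \<and>
     (\<forall>j i. F j i \<noteq> 0 \<longrightarrow> (fst X + i) mod n = (fst Y + j) mod n) \<and>
     (\<forall>i < snd X. \<forall>j < snd Y.
        (if 0 < i then F j (i - 1) else 0) = (if j + 1 < snd Y then F (j + 1) i else 0))}"

definition homT_nz :: "'k::field itself \<Rightarrow> nat \<Rightarrow> obj \<Rightarrow> obj \<Rightarrow> bool" where
  "homT_nz K n X Y \<longleftrightarrow> (\<exists>F::nat \<Rightarrow> nat \<Rightarrow> 'k. F \<in> homT n X Y \<and> F \<noteq> (\<lambda>_ _. 0))"

text \<open>Nonzero D-map X -> Y in C_n: Hom_D(X, tau^-1 Y[1]) = D Hom_T(Y, tau^2 X) is nonzero.\<close>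
definition Dmap_nz :: "'k::field itself \<Rightarrow> nat \<Rightarrow> obj \<Rightarrow> obj \<Rightarrow> bool" where
  "Dmap_nz K n X Y \<longleftrightarrow> homT_nz K n Y (tau n (tau n X))"

text \<open>Ext^1_C(X,Y) = Hom_C(X, tau Y) = Hom_T(X, tau Y) + D Hom_T(Y, tau X).\<close>
definition ExtC_zero :: "'k::field itself \<Rightarrow> nat \<Rightarrow> obj \<Rightarrow> obj \<Rightarrow> bool" where
  "ExtC_zero K n X Y \<longleftrightarrow> \<not> homT_nz K n X (tau n Y) \<and> \<not> homT_nz K n Y (tau n X)"

text \<open>A basic object is given by its (finite) set of pairwise non-isomorphic indecomposable summands.\<close>
definition rigid :: "'k::field itself \<Rightarrow> nat \<Rightarrow> obj set \<Rightarrow> bool" where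
  "rigid K n T \<longleftrightarrow> (\<forall>X\<in>T. \<forall>Y\<in>T. ExtC_zero K n X Y)"

definition maximal_rigid :: "'k::field itself \<Rightarrow> nat \<Rightarrow> obj set \<Rightarrow> bool" where
  "maximal_rigid K n T \<longleftrightarrow> finite T \<and> (\<forall>X\<in>T. ind n X) \<and> rigid K n T \<and>
     (\<forall>X. ind n X \<longrightarrow> rigid K n (insert X T) \<longrightarrow> X \<in> T)"

definition left_edge :: "nat \<Rightarrow> obj \<Rightarrow> obj set" where
  "left_edge n X = {(fst X, i') | i'. 1 \<le> i' \<and> i' \<le> snd X}"

definition right_edge :: "nat \<Rightarrow> obj \<Rightarrow> obj set" where
  "right_edge n X = {((fst X + snd X - i') mod n, i') | i'. 1 \<le> i' \<and> i' \<le> snd X}"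

definition wing :: "nat \<Rightarrow> obj \<Rightarrow> obj set" where
  "wing n X = {((fst X + s) mod n, i') | s i'. 1 \<le> i' \<and> s + i' \<le> snd X}"

definition subwing_triple :: "nat \<Rightarrow> obj \<Rightarrow> obj \<Rightarrow> obj \<Rightarrow> bool" where
  "subwing_triple n X Y Z \<longleftrightarrow> (\<exists>a b c. a < n \<and> X = (a, b) \<and> 3 \<le> b \<and> b \<le> n - 1 \<and>
      1 \<le> c \<and> c \<le> b - 2 \<and> Y = (a, c) \<and> Z = ((a + c + 1) mod n, b - c - 1))"

end

theory Submission imports Defs "HOL-Number_Theory.Cong" begin

lemma homT_nz_iff:
  "homT_nz (K::'k::field itself) n (a,b) (c,d) \<longleftrightarrow> (\<exists>i<b. b - i \<le> d \<and> (a+i) mod n = c mod n)"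
proof
  assume "homT_nz K n (a,b) (c,d)"
  then obtain F :: "nat \<Rightarrow> nat \<Rightarrow> 'k" where F: "F \<in> homT n (a,b) (c,d)" and nz: "F \<noteq> (\<lambda>_ _. 0)"
    unfolding homT_nz_def by blast
  from nz obtain j i where ji: "F j i \<noteq> 0" by (meson ext)
  have H1: "\<And>j i. i \<ge> b \<or> j \<ge> d \<Longrightarrow> F j i = 0"
    and H2: "\<And>j i. F j i \<noteq> 0 \<Longrightarrow> (a + i) mod n = (c + j) mod n"
    and H3: "\<And>i j. i < b \<Longrightarrow> j < d \<Longrightarrow>
        (if 0 < i then F j (i - 1) else 0) = (if j + 1 < d then F (j + 1) i else 0)"
    using F unfolding homT_def by auto
  have down: "\<forall>i. F j i \<noteq> 0 \<longrightarrow> j \<le> i \<and> F 0 (i - j) \<noteq> 0" for j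
  proof (induction j)
    case 0 then show ?case by simp
  next
    case (Suc j)
    show ?case
    proof (intro allI impI)
      fix i assume a1: "F (Suc j) i \<noteq> 0"
      have "i < b" "Suc j < d" using H1 a1 by (meson not_le)+
      from H3[OF \<open>i < b\<close>, of j] \<open>Suc j < d\<close> a1
      have "0 < i" "F j (i - 1) \<noteq> 0" by (auto split: if_splits)
      with Suc have "j \<le> i - 1 \<and> F 0 (i - 1 - j) \<noteq> 0" by blast
      then have h: "j \<le> i - 1" "F 0 (i - 1 - j) \<noteq> 0" by auto
      have "Suc j \<le> i" using h(1) \<open>0 < i\<close> by linarith
      moreover have "F 0 (i - Suc j) \<noteq> 0" using h(2) by (simp add: diff_diff_left)
      ultimately show "Suc j \<le> i \<and> F 0 (i - Suc j) \<noteq> 0" by blast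
    qed
  qed
  define i0 where "i0 = i - j"
  have F0: "F 0 i0 \<noteq> 0" using down ji i0_def by blast
  have "i0 < b" "0 < d" using H1 F0 by (meson not_le)+
  have up: "k < d \<longrightarrow> i0 + k < b \<longrightarrow> F k (i0 + k) = F 0 i0" for k
  proof (induction k)
    case 0 then show ?case by simp
  next
    case (Suc k)
    show ?case
    proof (intro impI)
      assume "Suc k < d" "i0 + Suc k < b"
      from H3[of "i0 + Suc k" k] this
      have "F k (i0 + k) = F (Suc k) (i0 + Suc k)" by simp
      with Suc \<open>Suc k < d\<close> \<open>i0 + Suc k < b\<close> show "F (Suc k) (i0 + Suc k) = F 0 i0" by simp
    qed
  qed
  have "b - i0 \<le> d"
  proof (rule ccontr)
    assume "\<not> b - i0 \<le> d"
    then have lt: "i0 + d < b" by simp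
    have "F (d - 1) (i0 + (d - 1)) = F 0 i0" using up[of "d - 1"] lt \<open>0 < d\<close> by simp
    moreover have "F (d - 1) (i0 + (d - 1)) = 0"
      using H3[of "i0 + d" "d - 1"] lt \<open>0 < d\<close> by (simp add: Suc_diff_Suc)
    ultimately show False using F0 by simp
  qed
  moreover have "(a + i0) mod n = c mod n" using H2[OF F0] by simp
  ultimately show "\<exists>i<b. b - i \<le> d \<and> (a+i) mod n = c mod n" using \<open>i0 < b\<close> by blast
next
  assume "\<exists>i<b. b - i \<le> d \<and> (a+i) mod n = c mod n"
  then obtain i0 where i0: "i0 < b" "b - i0 \<le> d" "(a+i0) mod n = c mod n" by blast
  define F :: "nat \<Rightarrow> nat \<Rightarrow> 'k" where "F = (\<lambda>j i. if j < d \<and> i < b \<and> i = j + i0 then 1 else 0)"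
  have "F \<in> homT n (a,b) (c,d)"
    unfolding homT_def
  proof (intro CollectI conjI allI impI)
    fix j i assume "i \<ge> snd (a,b) \<or> j \<ge> snd (c,d)" then show "F j i = 0" by (auto simp: F_def)
  next
    fix j i assume "F j i \<noteq> 0"
    then have "i = j + i0" by (auto simp: F_def split: if_splits)
    then show "(fst (a,b) + i) mod n = (fst (c,d) + j) mod n"
    proof -
      have "(a + i0 + j) mod n = (c + j) mod n" using i0(3) by (metis mod_add_left_eq)
      then show ?thesis using \<open>i = j + i0\<close> by (simp add: ac_simps)
    qed
  next
    fix i j assume "i < snd (a,b)" "j < snd (c,d)"
    then show "(if 0 < i then F j (i - 1) else 0) = (if j + 1 < snd (c, d) then F (j + 1) i else 0)"
      using i0 by (auto simp: F_def)
  qed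
  moreover have "F 0 i0 = 1" using i0 by (auto simp: F_def)
  then have "F \<noteq> (\<lambda>_ _. 0)" by (metis one_neq_zero)
  ultimately show "homT_nz K n (a,b) (c,d)" unfolding homT_nz_def by blast
qed


lemma ex_i: "(\<exists>i<b. b - i \<le> d \<and> p + i = (s::nat)) \<longleftrightarrow> (p \<le> s \<and> s < p + b \<and> p + b \<le> s + d)"
proof
  assume "p \<le> s \<and> s < p + b \<and> p + b \<le> s + d"
  then show "\<exists>i<b. b - i \<le> d \<and> p + i = s" by (intro exI[of _ "s - p"]) auto
qed auto

lemma cancel_mod: "((t + x) mod n = (t + y) mod n) \<longleftrightarrow> (x mod n = y mod (n::nat))"
  using cong_add_lcancel_nat[of t x y n] unfolding cong_def by simp

lemma hom_lin:
  assumes "p + b \<le> n" "s < n"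
  shows "homT_nz (K::'k::field itself) n ((t+p) mod n, b) ((t+s) mod n, d) \<longleftrightarrow> (p \<le> s \<and> s < p + b \<and> p + b \<le> s + d)"
proof -
  have "homT_nz K n ((t+p) mod n, b) ((t+s) mod n, d) \<longleftrightarrow> (\<exists>i<b. b - i \<le> d \<and> ((t+p) mod n + i) mod n = ((t+s) mod n) mod n)"
    by (rule homT_nz_iff)
  also have "\<dots> \<longleftrightarrow> (\<exists>i<b. b - i \<le> d \<and> (p + i) mod n = s mod n)"
    by (simp add: mod_add_left_eq cancel_mod add.assoc)
  also have "\<dots> \<longleftrightarrow> (\<exists>i<b. b - i \<le> d \<and> p + i = s)"
    using assms by (intro ex_cong1) auto
  also have "\<dots> \<longleftrightarrow> (p \<le> s \<and> s < p + b \<and> p + b \<le> s + d)" by (rule ex_i)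
  finally show ?thesis .
qed

lemma m1:
  assumes "p < (n::nat)" shows "(p + n - 1) mod n = (if p = 0 then n - 1 else p - 1)"
proof (cases p)
  case 0
  then show ?thesis using assms by simp
next
  case (Suc q)
  then have "p + n - 1 = q + n" by simp
  then show ?thesis using Suc assms by simp
qed

lemma tau_lin:
  assumes "1 \<le> n" shows "tau n ((t+s) mod n, d) = ((t + (s + n - 1) mod n) mod n, d)"
proof -
  have "((t+s) mod n + n - 1) mod n = ((t+s) mod n + (n - 1)) mod n" using assms by simp
  also have "\<dots> = (t + s + (n - 1)) mod n" by (simp add: mod_add_left_eq)
  also have "\<dots> = (t + (s + (n - 1)) mod n) mod n" by (simp add: mod_add_right_eq add.assoc)
  also have "s + (n - 1) = s + n - 1" using assms by simp
  finally show ?thesis unfolding tau_def by simp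
qed

lemma ext_lin:
  assumes "2 \<le> n" "p + b \<le> n - 1" "p' + d \<le> n - 1"
  shows "ExtC_zero (K::'k::field itself) n ((t+p) mod n, b) ((t+p') mod n, d) \<longleftrightarrow>
     \<not>(p < p' \<and> p' \<le> p + b \<and> p + b < p' + d) \<and> \<not>(p' < p \<and> p \<le> p' + d \<and> p' + d < p + b)"
proof -
  have n1: "1 \<le> n" using assms by simp
  have pn: "p < n" "p' < n" using assms by auto
  have A: "homT_nz K n ((t+p) mod n, b) (tau n ((t+p') mod n, d)) \<longleftrightarrow> (p < p' \<and> p' \<le> p + b \<and> p + b < p' + d)"
    unfolding tau_lin[OF n1] m1[OF pn(2)] using assms
    by (subst hom_lin) (auto split: if_splits)
  have B: "homT_nz K n ((t+p') mod n, d) (tau n ((t+p) mod n, b)) \<longleftrightarrow> (p' < p \<and> p \<le> p' + d \<and> p' + d < p + b)"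
    unfolding tau_lin[OF n1] m1[OF pn(1)] using assms
    by (subst hom_lin) (auto split: if_splits)
  show ?thesis unfolding ExtC_zero_def A B ..
qed

lemma dmap_lin:
  assumes "2 \<le> n" "p + b \<le> n - 1" "p' + d \<le> n - 1" "1 \<le> b" "1 \<le> d"
  shows "Dmap_nz (K::'k::field itself) n ((t+p) mod n, b) ((t+p') mod n, d) \<longleftrightarrow>
     (p = 0 \<and> p' + d = n - 1) \<or> (p' + 2 \<le> p \<and> p \<le> p' + d + 1 \<and> p' + d + 2 \<le> p + b)"
proof -
  have n1: "1 \<le> n" using assms by simp
  have pn: "p < n" "p' < n" using assms by auto
  define q where "q = (if p = 0 then n - 1 else p - 1)"
  have q: "q < n" using pn n1 q_def by auto
  define r where "r = (if q = 0 then n - 1 else q - 1)"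
  have r: "r < n" using q n1 r_def by auto
  show ?thesis
    unfolding Dmap_nz_def tau_lin[OF n1] m1[OF pn(1)] q_def[symmetric] m1[OF q] r_def[symmetric]
    using assms r by (subst hom_lin) (auto simp: r_def q_def split: if_splits)
qed


lemma hom_gen:
  "homT_nz (K::'k::field itself) n ((t+p) mod n, b) ((t+s) mod n, d) \<longleftrightarrow> (\<exists>i<b. b - i \<le> d \<and> (p + i) mod n = s mod n)"
  unfolding homT_nz_iff by (simp add: mod_add_left_eq cancel_mod add.assoc)

lemma eq_lin: "x < n \<Longrightarrow> y < n \<Longrightarrow> ((t + x) mod n = (t + y) mod (n::nat)) \<longleftrightarrow> x = y"
  by (simp add: cancel_mod)

lemma mem_left_edge: "Y \<in> left_edge n X \<longleftrightarrow> fst Y = fst X \<and> 1 \<le> snd Y \<and> snd Y \<le> snd X"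
  by (cases Y) (auto simp: left_edge_def)

lemma mem_right_edge: "Y \<in> right_edge n X \<longleftrightarrow> fst Y = (fst X + snd X - snd Y) mod n \<and> 1 \<le> snd Y \<and> snd Y \<le> snd X"
  by (cases Y) (auto simp: right_edge_def)

theorem lemma2p9:
  fixes K :: "'k::alg_closed_field itself"
    and n :: nat and T :: "obj set" and T1 Ti Tj :: obj
  assumes "2 \<le> n"
    and "maximal_rigid K n T"
    and "T1 \<in> T" and "snd T1 = n - 1"
    and "Ti \<in> T" and "Tj \<in> T"
  shows "Dmap_nz K n Ti Tj \<longleftrightarrow>
    ((\<exists>Tx\<in>T. \<exists>Ty\<in>T. \<exists>Tz\<in>T. subwing_triple n Tx Ty Tz \<and>
        Ti \<in> left_edge n Tz \<and> Tj \<in> right_edge n Ty)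
     \<or> (Ti \<in> left_edge n T1 \<and> Tj \<in> right_edge n T1))"
proof -
  have n1: "1 \<le> n" using assms(1) by simp
  from assms(2) have indT: "\<And>X. X \<in> T \<Longrightarrow> ind n X" and rig: "rigid K n T"
    and maxl: "\<And>X. ind n X \<Longrightarrow> rigid K n (insert X T) \<Longrightarrow> X \<in> T"
    unfolding maximal_rigid_def by auto
  have ext: "\<And>X Y. X \<in> T \<Longrightarrow> Y \<in> T \<Longrightarrow> ExtC_zero K n X Y" using rig unfolding rigid_def by blast
  obtain t where T1: "T1 = (t, n - 1)" and tn: "t < n"
    using indT[OF assms(3)] assms(4) by (cases T1) (auto simp: ind_def)
  define P where "P X = (fst X + n - t) mod n" for X :: obj
  have Pn: "P X < n" for X unfolding P_def using n1 by simp
  have repr: "X = ((t + P X) mod n, snd X)" if "ind n X" for X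
  proof -
    have "(t + P X) mod n = (t + (fst X + n - t)) mod n" unfolding P_def by (simp add: mod_add_right_eq)
    also have "t + (fst X + n - t) = fst X + n" using tn by simp
    also have "(fst X + n) mod n = fst X" using that by (simp add: ind_def)
    finally show ?thesis by simp
  qed
  have PT1: "P T1 = 0" unfolding P_def T1 using tn by simp
  have bnd: "P X + snd X \<le> n - 1 \<and> 1 \<le> snd X" if X: "X \<in> T" for X
  proof -
    define p where "p = P X"
    define b where "b = snd X"
    have rX: "X = ((t + p) mod n, b)" unfolding p_def b_def by (rule repr[OF indT[OF X]])
    have b1: "1 \<le> b" using indT[OF X] b_def by (simp add: ind_def)
    have "b \<le> n - 1"
    proof (rule ccontr)
      assume "\<not> b \<le> n - 1"
      have "homT_nz K n X (tau n X)"
        unfolding rX tau_lin[OF n1] hom_gen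
        using \<open>\<not> b \<le> n - 1\<close> n1 by (intro exI[of _ "n - 1"]) (auto simp: add.assoc)
      then show False using ext[OF X X] unfolding ExtC_zero_def by blast
    qed
    moreover have "p + b \<le> n - 1"
    proof (rule ccontr)
      assume a: "\<not> p + b \<le> n - 1"
      have pn: "p < n" using Pn p_def by simp
      have rT1: "T1 = ((t + 0) mod n, n - 1)" using T1 tn by simp
      have "homT_nz K n X (tau n T1)"
        unfolding rX rT1 tau_lin[OF n1] hom_gen
        using a pn \<open>b \<le> n - 1\<close> n1 by (intro exI[of _ "n - 1 - p"]) auto
      then show False using ext[OF X assms(3)] unfolding ExtC_zero_def by blast
    qed
    ultimately show ?thesis using b1 p_def b_def by simp
  qed
  have lin: "X = ((t + P X) mod n, snd X)" if "X \<in> T" for X by (rule repr[OF indT[OF that]])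
  define C where "C p b p' d \<longleftrightarrow> \<not>(p < p' \<and> p' \<le> p + b \<and> p + b < p' + d) \<and> \<not>(p' < p \<and> p \<le> p' + d \<and> p' + d < p + b)"
    for p b p' d :: nat
  define E where "E p q p' q' \<longleftrightarrow> \<not>(p < p' \<and> p' \<le> q \<and> q < q') \<and> \<not>(p' < p \<and> p \<le> q' \<and> q' < q)"
    for p q p' q' :: nat
  have compT: "C (P X) (snd X) (P Y) (snd Y)" if "X \<in> T" "Y \<in> T" for X Y
    using ext[OF that] ext_lin[OF assms(1) bnd[OF that(1), THEN conjunct1] bnd[OF that(2), THEN conjunct1], of K t]
    unfolding lin[OF that(1), symmetric] lin[OF that(2), symmetric] C_def by simp
  have newT: "((t + p) mod n, b) \<in> T" if "1 \<le> b" "p + b \<le> n - 1" "\<And>W. W \<in> T \<Longrightarrow> C p b (P W) (snd W)" for p b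
  proof (rule maxl)
    show "ind n ((t + p) mod n, b)" using that n1 by (simp add: ind_def)
    show "rigid K n (insert ((t + p) mod n, b) T)"
      unfolding rigid_def
    proof (intro ballI)
      fix X Y assume X: "X \<in> insert ((t + p) mod n, b) T" and Y: "Y \<in> insert ((t + p) mod n, b) T"
      have E: "ExtC_zero K n ((t + p) mod n, b) ((t + p') mod n, d) \<longleftrightarrow> C p b p' d"
        if "p' + d \<le> n - 1" for p' d
        using ext_lin[OF assms(1) \<open>p + b \<le> n - 1\<close> that] unfolding C_def by simp
      have E2: "ExtC_zero K n ((t + p') mod n, d) ((t + p) mod n, b) \<longleftrightarrow> C p b p' d"
        if "p' + d \<le> n - 1" for p' d
        using ext_lin[OF assms(1) that \<open>p + b \<le> n - 1\<close>] unfolding C_def by auto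
      show "ExtC_zero K n X Y"
      proof (cases "X \<in> T")
        case XT: True
        show ?thesis
        proof (cases "Y \<in> T")
          case True then show ?thesis using ext XT by blast
        next
          case False then have "Y = ((t + p) mod n, b)" using Y by blast
          then show ?thesis using E2[OF bnd[OF XT, THEN conjunct1]] that(3)[OF XT]
            unfolding lin[OF XT, symmetric] by simp
        qed
      next
        case XF: False then have Xe: "X = ((t + p) mod n, b)" using X by blast
        show ?thesis
        proof (cases "Y \<in> T")
          case True then show ?thesis using E[OF bnd[OF True, THEN conjunct1]] that(3)[OF True] Xe
            unfolding lin[OF True, symmetric] by simp
        next
          case False then have "Y = ((t + p) mod n, b)" using Y by blast
          then show ?thesis using E[OF \<open>p + b \<le> n - 1\<close>] Xe unfolding C_def by simp
        qed
      qed
    qed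
  qed
  define pi where "pi = P Ti"
  define bi where "bi = snd Ti"
  define pj where "pj = P Tj"
  define dj where "dj = snd Tj"
  have bTi: "pi + bi \<le> n - 1" "1 \<le> bi" using bnd[OF assms(5)] pi_def bi_def by auto
  have bTj: "pj + dj \<le> n - 1" "1 \<le> dj" using bnd[OF assms(6)] pj_def dj_def by auto
  have rTi: "Ti = ((t + pi) mod n, bi)" unfolding pi_def bi_def by (rule lin[OF assms(5)])
  have rTj: "Tj = ((t + pj) mod n, dj)" unfolding pj_def dj_def by (rule lin[OF assms(6)])
  have D: "Dmap_nz K n Ti Tj \<longleftrightarrow> (pi = 0 \<and> pj + dj = n - 1) \<or> (pj + 2 \<le> pi \<and> pi \<le> pj + dj + 1 \<and> pj + dj + 2 \<le> pi + bi)"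
    unfolding rTi rTj using dmap_lin[OF assms(1) bTi(1) bTj(1) bTi(2) bTj(2)] by simp
  have Cij: "C pi bi pj dj" using compT[OF assms(5,6)] pi_def bi_def pj_def dj_def by simp
  have fstP: "fst X = fst Y \<longleftrightarrow> P X = P Y" if "X \<in> T" "Y \<in> T" for X Y
  proof
    assume "fst X = fst Y" then show "P X = P Y" unfolding P_def by simp
  next
    assume "P X = P Y" then show "fst X = fst Y" using lin[OF that(1)] lin[OF that(2)] by (metis fst_conv)
  qed
  have modP: "fst X = (t + q) mod n \<longleftrightarrow> P X = q" if "X \<in> T" "q < n" for X q
    using lin[OF that(1)] eq_lin[OF Pn that(2)] by (metis fst_conv)
  show ?thesis
  proof
    assume "Dmap_nz K n Ti Tj"
    then consider (c1) "pi = 0" "pj + dj = n - 1" | (c2) "pj + 2 \<le> pi" "pi \<le> pj + dj + 1" "pj + dj + 2 \<le> pi + bi"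
      using D by blast
    then show "((\<exists>Tx\<in>T. \<exists>Ty\<in>T. \<exists>Tz\<in>T. subwing_triple n Tx Ty Tz \<and>
        Ti \<in> left_edge n Tz \<and> Tj \<in> right_edge n Ty)
     \<or> (Ti \<in> left_edge n T1 \<and> Tj \<in> right_edge n T1))"
    proof cases
      case c1
      have "Ti \<in> left_edge n T1" unfolding mem_left_edge
        using fstP[OF assms(5,3)] PT1 c1 pi_def bi_def bTi assms(4) by simp
      moreover have "Tj \<in> right_edge n T1" unfolding mem_right_edge
      proof (intro conjI)
        have "fst T1 + snd T1 - snd Tj = t + pj" using T1 c1 dj_def by simp
        then show "fst Tj = (fst T1 + snd T1 - snd Tj) mod n" using rTj by simp
      qed (use bTj dj_def assms(4) in auto)
      ultimately show ?thesis by blast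
    next
      case c2
      have gap: "pi = pj + dj + 1" using Cij c2 bTj unfolding C_def by arith
      define g where "g = pj + dj"
      define l where "l = pj"
      define r where "r = pi + bi"
      define Q where "Q X \<longleftrightarrow> X \<in> T \<and> P X \<le> l \<and> r \<le> P X + snd X" for X
      have "Q T1" unfolding Q_def using assms(3,4) PT1 bTi r_def by simp
      from ex_has_least_nat[of Q, OF this, of snd] obtain X where QX: "Q X"
        and minX: "\<And>Y. Q Y \<Longrightarrow> snd X \<le> snd Y" by blast
      have XT: "X \<in> T" using QX Q_def by simp
      define a where "a = P X"
      define e where "e = P X + snd X"
      have ae: "a \<le> l" "r \<le> e" "e \<le> n - 1" using QX bnd[OF XT] unfolding Q_def a_def e_def by auto
      have lg: "l < g" "g + 1 = pi" "g + 2 \<le> r" using c2 gap bTi unfolding l_def g_def r_def by auto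
      have CY: "C a (g - a) (P W) (snd W)" and CZ: "C (g + 1) (e - g - 1) (P W) (snd W)" if W: "W \<in> T" for W
      proof -
        define u where "u = P W"
        define v where "v = P W + snd W"
        have CE: "C p b p' d \<longleftrightarrow> E p (p + b) p' (p' + d)" for p b p' d
          unfolding C_def E_def ..
        have h1: "E u v a e" using compT[OF W XT] CE u_def v_def a_def e_def by simp
        have h2: "E u v pi r" using compT[OF W assms(5)] CE u_def v_def pi_def bi_def r_def by simp
        have h3: "E u v l g" using compT[OF W assms(6)] CE u_def v_def pj_def dj_def l_def g_def by simp
        have h4: "u \<le> l \<and> r \<le> v \<longrightarrow> e + u \<le> v + a"
          using minX[of W] W unfolding Q_def u_def v_def e_def a_def by auto
        have uv: "u < v" using bnd[OF W] u_def v_def by simp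
        have lg2: "g + 1 = pi" "l < g" "g + 2 \<le> r" "a \<le> l" "r \<le> e" using lg ae by auto
        have "E a g u v \<and> E (g + 1) e u v"
          using h1 h2 h3 h4 uv lg2 unfolding E_def by arith
        moreover have "a + (g - a) = g" "g + 1 + (e - g - 1) = e" "u + (v - u) = v" using lg2 uv by auto
        ultimately show "C a (g - a) (P W) (snd W)" "C (g + 1) (e - g - 1) (P W) (snd W)"
          using u_def v_def CE by auto
      qed
      define Y where "Y = ((t + a) mod n, g - a)"
      define Z where "Z = ((t + (g + 1)) mod n, e - g - 1)"
      have YT: "Y \<in> T" unfolding Y_def using lg ae by (intro newT CY) auto
      have ZT: "Z \<in> T" unfolding Z_def using lg ae by (intro newT CZ) auto
      have fX: "fst X = (t + a) mod n" using lin[OF XT] a_def by (metis fst_conv)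
      have sX: "snd X = e - a" using a_def e_def by simp
      have "subwing_triple n X Y Z"
        unfolding subwing_triple_def
      proof (intro exI conjI)
        show "fst X < n" using indT[OF XT] by (simp add: ind_def)
        show "X = (fst X, snd X)" by simp
        show "3 \<le> snd X" "snd X \<le> n - 1" "1 \<le> g - a" "g - a \<le> snd X - 2" using sX ae lg by auto
        show "Y = (fst X, g - a)" using fX Y_def by simp
        have "(fst X + (g - a) + 1) mod n = (t + a + (g - a) + 1) mod n"
          unfolding fX by (metis add.assoc mod_add_left_eq)
        also have "t + a + (g - a) + 1 = t + (g + 1)" using ae lg by simp
        finally show "Z = ((fst X + (g - a) + 1) mod n, snd X - (g - a) - 1)"
          unfolding Z_def using sX ae lg(1) by simp
      qed
      moreover have "Ti \<in> left_edge n Z" unfolding mem_left_edge Z_def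
        using rTi lg bTi ae r_def by simp
      moreover have "Tj \<in> right_edge n Y" unfolding mem_right_edge
      proof (intro conjI)
        have "fst Y + snd Y - snd Tj = (t + a) mod n + (l - a)"
          unfolding Y_def using ae lg dj_def l_def g_def by simp
        then have "(fst Y + snd Y - snd Tj) mod n = (t + a + (l - a)) mod n" by (simp add: mod_add_left_eq)
        also have "t + a + (l - a) = t + pj" using ae l_def by simp
        finally show "fst Tj = (fst Y + snd Y - snd Tj) mod n" using rTj by simp
      qed (use bTj dj_def Y_def g_def ae l_def in auto)
      ultimately show ?thesis using XT YT ZT by blast
    qed
  next
    assume "((\<exists>Tx\<in>T. \<exists>Ty\<in>T. \<exists>Tz\<in>T. subwing_triple n Tx Ty Tz \<and>
        Ti \<in> left_edge n Tz \<and> Tj \<in> right_edge n Ty)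
     \<or> (Ti \<in> left_edge n T1 \<and> Tj \<in> right_edge n T1))"
    then show "Dmap_nz K n Ti Tj"
    proof
      assume "\<exists>Tx\<in>T. \<exists>Ty\<in>T. \<exists>Tz\<in>T. subwing_triple n Tx Ty Tz \<and>
        Ti \<in> left_edge n Tz \<and> Tj \<in> right_edge n Ty"
      then obtain Tx Ty Tz where TT: "Tx \<in> T" "Ty \<in> T" "Tz \<in> T" and sw: "subwing_triple n Tx Ty Tz"
        and le: "Ti \<in> left_edge n Tz" and re: "Tj \<in> right_edge n Ty" by blast
      from sw obtain a b c where abc: "a < n" "Tx = (a, b)" "3 \<le> b" "b \<le> n - 1" "1 \<le> c" "c \<le> b - 2"
        "Ty = (a, c)" "Tz = ((a + c + 1) mod n, b - c - 1)" unfolding subwing_triple_def by blast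
      define px where "px = P Tx"
      have bx: "px + b \<le> n - 1" using bnd[OF TT(1)] abc px_def by simp
      have fx: "a = (t + px) mod n" using lin[OF TT(1)] abc px_def by (metis fst_conv)
      have py: "P Ty = px" using fstP[OF TT(2,1)] abc px_def by simp
      have "fst Tz = (a + c + 1) mod n" using abc by simp
      also have "\<dots> = ((t + px) mod n + (c + 1)) mod n" using fx by (simp add: add.assoc)
      also have "\<dots> = (t + px + (c + 1)) mod n" by (rule mod_add_left_eq)
      also have "t + px + (c + 1) = t + (px + c + 1)" by simp
      finally have "fst Tz = (t + (px + c + 1)) mod n" .
      moreover have "px + c + 1 < n" using bx abc by linarith
      ultimately have pz: "P Tz = px + c + 1" using modP[OF TT(3)] by blast
      have "pi = px + c + 1" "bi \<le> b - c - 1"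
        using le fstP[OF assms(5) TT(3)] pz abc pi_def bi_def unfolding mem_left_edge by auto
      moreover have "dj \<le> c" using re abc dj_def unfolding mem_right_edge by simp
      moreover have "fst Tj = (t + (px + c - dj)) mod n"
      proof -
        have "fst Tj = (a + c - dj) mod n" using re abc dj_def unfolding mem_right_edge by simp
        also have "a + c - dj = (t + px) mod n + (c - dj)" using fx \<open>dj \<le> c\<close> by simp
        also have "(\<dots>) mod n = (t + px + (c - dj)) mod n" by (rule mod_add_left_eq)
        also have "t + px + (c - dj) = t + (px + c - dj)" using \<open>dj \<le> c\<close> by simp
        finally show ?thesis .
      qed
      then have "pj = px + c - dj" using modP[OF assms(6)] bx abc pj_def by simp
      ultimately show ?thesis unfolding D using bTi bTj abc by auto
    next
      assume a: "Ti \<in> left_edge n T1 \<and> Tj \<in> right_edge n T1"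
      then have pi0: "pi = 0" using fstP[OF assms(5,3)] PT1 pi_def unfolding mem_left_edge by simp
      have "dj \<le> n - 1" "fst Tj = (t + (n - 1 - dj)) mod n"
        using a T1 dj_def unfolding mem_right_edge by auto
      moreover have "n - 1 - dj < n" using n1 by simp
      ultimately have "pj = n - 1 - dj" using modP[OF assms(6)] pj_def by blast
      then show ?thesis unfolding D using bTj pi0 by simp
    qed
  qed
qed

end
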